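(* Let $q$ be a prime number, $l\ge 2$ an integer, and $\alpha=\alpha_1/\alpha_2\in\mathbb{Q}\text{-}\mathcal{KS}(q^{l})$. Then $\alpha\in[-1,0[$ if and only if there exists a positive integer $d$ with $d\mid(q^{l}-q)$ such that $$\alpha=q-\frac{d}{\alpha_2}\quad\text{and}\quad \alpha_2\in\Bigl\{\Bigl\lceil\frac{d}{q+1}\Bigr\rceil,\dots,\Bigl\lceil\frac{d}{q}\Bigr\rceil-1\Bigr\}.$$
   Context: Every nonzero rational $\alpha$ is written $\alpha=\alpha_1/\alpha_2$ with $\alpha_1\in\mathbb{Z}$, $\alpha_2$ a positive integer and $\gcd(\alpha_1,\alpha_2)=1$. For an integer $N\ge 2$ and a nonzero rational $\alpha=\alpha_1/\alpha_2$, $N$ is called an $\alpha$-Korselt number if $N\neq\alpha$ and $\alpha_2p-\alpha_1$ divides $\alpha_2N-\alpha_1$ (in $\mathbb{Z}$) for every prime divisor $p$ of $N$. $\mathbb{Q}\text{-}\mathcal{KS}(N)$ is the set of all $\beta\in\mathbb{Q}\setminus\{0,N\}$ such that $N$ is a $\beta$-Korselt number. $[-1,0[=\{x:-1\le x<0\}$; $\lceil\cdot\rceil$ is the ceiling function; $\{a,\dots,b\}$ is the set of integers from $a$ to $b$ (empty if $a>b$). *)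

theory Defs
  imports Complex_Main "HOL-Computational_Algebra.Primes"
begin

text \<open>A nonzero rational alpha is written alpha1/alpha2 with alpha2 > 0 and
  gcd(alpha1,alpha2) = 1; this is exactly quotient_of alpha = (alpha1, alpha2).\<close>

definition num_of :: "rat \<Rightarrow> int" where
  "num_of \<alpha> = fst (quotient_of \<alpha>)"

definition den_of :: "rat \<Rightarrow> int" where
  "den_of \<alpha> = snd (quotient_of \<alpha>)"

definition korselt :: "nat \<Rightarrow> rat \<Rightarrow> bool" where
  "korselt N \<alpha> \<longleftrightarrow> N \<ge> 2 \<and> \<alpha> \<noteq> 0 \<and> \<alpha> \<noteq> of_nat N \<and>
     (\<forall>p::nat. prime p \<and> p dvd N \<longrightarrow>
        (den_of \<alpha> * int p - num_of \<alpha>) dvd (den_of \<alpha> * int N - num_of \<alpha>))"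

definition Q_KS :: "nat \<Rightarrow> rat set" where
  "Q_KS N = {\<beta>. \<beta> \<noteq> 0 \<and> \<beta> \<noteq> of_nat N \<and> korselt N \<beta>}"

end

theory Submission
  imports Defs
begin

theorem proposition5p7:
  fixes q l :: nat and \<alpha> :: rat
  assumes "prime q" and "l \<ge> 2" and "\<alpha> \<in> Q_KS (q ^ l)"
  shows "(-1 \<le> \<alpha> \<and> \<alpha> < 0) \<longleftrightarrow>
    (\<exists>d::int. d > 0 \<and> d dvd (int q ^ l - int q) \<and>
       \<alpha> = of_nat q - of_int d / of_int (den_of \<alpha>) \<and>
       den_of \<alpha> \<in> {\<lceil>of_int d / (of_nat q + 1 :: rat)\<rceil> .. \<lceil>of_int d / (of_nat q :: rat)\<rceil> - 1})"
proof -
  define a where "a = num_of \<alpha>"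
  define b where "b = den_of \<alpha>"
  have qa: "quotient_of \<alpha> = (a, b)" unfolding a_def b_def num_of_def den_of_def by simp
  have bpos: "b > 0" using quotient_of_denom_pos[OF qa] .
  have cop: "coprime a b" using quotient_of_coprime[OF qa] .
  have aval: "\<alpha> = of_int a / of_int b" using quotient_of_div[OF qa] .
  have qpos: "q > 0" using assms(1) prime_gt_0_nat by blast
  have qrat: "(of_nat q :: rat) > 0" using qpos by simp
  have brat: "(of_int b :: rat) > 0" using bpos by simp
  have key: "\<alpha> = of_nat q - of_int d / of_int b \<longleftrightarrow> d = b * int q - a" for d
  proof -
    have "\<alpha> = of_nat q - of_int d / of_int b \<longleftrightarrow> of_int a = (of_nat q * of_int b - of_int d :: rat)"
      using brat aval by (auto simp: field_simps)
    also have "\<dots> \<longleftrightarrow> of_int a = (of_int (int q * b - d) :: rat)" by simp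
    also have "\<dots> \<longleftrightarrow> d = b * int q - a" by (simp only: of_int_eq_iff) (auto simp: algebra_simps)
    finally show ?thesis .
  qed
  have range: "b \<in> {\<lceil>of_int d / (of_nat q + 1 :: rat)\<rceil> .. \<lceil>of_int d / (of_nat q :: rat)\<rceil> - 1}
     \<longleftrightarrow> of_int d / (of_nat q + 1) \<le> (of_int b :: rat) \<and> of_int b < (of_int d / of_nat q :: rat)" for d
    by (auto simp: ceiling_le_iff less_ceiling_iff)
  have r2: "of_int d / (of_nat q + 1) \<le> (of_int b :: rat) \<and> of_int b < (of_int d / of_nat q :: rat)
     \<longleftrightarrow> of_int d \<le> (of_nat q + 1) * (of_int b :: rat) \<and> of_int b * of_nat q < (of_int d :: rat)" for d
    using qrat by (auto simp: field_simps)
  have r3: "-1 \<le> \<alpha> \<and> \<alpha> < 0 \<longleftrightarrow> - of_int b \<le> (of_int a :: rat) \<and> of_int a < (0::rat)"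
    unfolding aval using brat by (simp add: le_divide_eq divide_less_0_iff)
  show ?thesis
  proof
    assume H: "-1 \<le> \<alpha> \<and> \<alpha> < 0"
    define d where "d = b * int q - a"
    have ar: "- b \<le> a" "a < 0" using H r3 by linarith+
    have dpos: "d > 0" using ar bpos qpos unfolding d_def
      by (smt (verit) mult_nonneg_nonneg of_nat_0_le_iff)
    have ks: "korselt (q ^ l) \<alpha>" using assms(3) by (simp add: Q_KS_def)
    have "(b * int q - a) dvd (b * int (q ^ l) - a)"
    proof -
      have "q dvd q ^ l" using assms(2) by (simp add: dvd_power)
      thus ?thesis using ks assms(1) unfolding korselt_def a_def b_def by auto
    qed
    hence d1: "d dvd (b * int q ^ l - a)" unfolding d_def by simp
    have "d dvd (b * int q ^ l - a) - d" using d1 by simp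
    hence "d dvd b * (int q ^ l - int q)" unfolding d_def by (simp add: algebra_simps)
    moreover have "coprime d b"
    proof (rule coprimeI)
      fix c assume c: "c dvd d" "c dvd b"
      have "c dvd b * int q - d" using c by simp
      hence "c dvd a" unfolding d_def by simp
      thus "is_unit c" using c(2) cop coprime_common_divisor by blast
    qed
    ultimately have dd: "d dvd (int q ^ l - int q)" using coprime_dvd_mult_right_iff by blast
    have "of_int d \<le> (of_nat q + 1) * (of_int b :: rat) \<and> of_int b * of_nat q < (of_int d :: rat)"
    proof -
      have "d \<le> (int q + 1) * b \<and> b * int q < d" using ar unfolding d_def by (simp add: algebra_simps)
      hence "(of_int d :: rat) \<le> of_int ((int q + 1) * b) \<and> (of_int (b * int q) :: rat) < of_int d"
        by (simp only: of_int_le_iff of_int_less_iff)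
      thus ?thesis by simp
    qed
    thus "\<exists>d::int. d > 0 \<and> d dvd (int q ^ l - int q) \<and>
       \<alpha> = of_nat q - of_int d / of_int (den_of \<alpha>) \<and>
       den_of \<alpha> \<in> {\<lceil>of_int d / (of_nat q + 1 :: rat)\<rceil> .. \<lceil>of_int d / (of_nat q :: rat)\<rceil> - 1}"
      using dpos dd key[of d] range[of d] r2[of d] unfolding b_def[symmetric] d_def by blast
  next
    assume "\<exists>d::int. d > 0 \<and> d dvd (int q ^ l - int q) \<and>
       \<alpha> = of_nat q - of_int d / of_int (den_of \<alpha>) \<and>
       den_of \<alpha> \<in> {\<lceil>of_int d / (of_nat q + 1 :: rat)\<rceil> .. \<lceil>of_int d / (of_nat q :: rat)\<rceil> - 1}"
    then obtain d where d: "\<alpha> = of_nat q - of_int d / of_int b"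
      "b \<in> {\<lceil>of_int d / (of_nat q + 1 :: rat)\<rceil> .. \<lceil>of_int d / (of_nat q :: rat)\<rceil> - 1}"
      unfolding b_def by blast
    have de: "d = b * int q - a" using key d(1) by blast
    have "of_int d \<le> (of_nat q + 1) * (of_int b :: rat) \<and> of_int b * of_nat q < (of_int d :: rat)"
      using d(2) range r2 by blast
    hence "of_int d \<le> (of_int ((int q + 1) * b) :: rat) \<and> (of_int (b * int q) :: rat) < of_int d" by simp
    hence "d \<le> (int q + 1) * b \<and> b * int q < d" by (simp only: of_int_le_iff of_int_less_iff)
    hence "- b \<le> a \<and> a < 0" using de by (simp add: algebra_simps)
    hence "- of_int b \<le> (of_int a :: rat) \<and> of_int a < (0::rat)" by simp
    thus "-1 \<le> \<alpha> \<and> \<alpha> < 0" using r3 by blast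
  qed
qed

end
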